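(* In the nonrepetitive game over any symbol set, suppose that whenever it is Ann's turn and the current sequence is $s_1,\ldots,s_{m-1}$ (so $m$ is odd), Ann chooses a symbol $s_m$ not excluded by the following rules: (i) $s_{m-2}$ is excluded; (ii) if $s_{m-1}=s_{m-4}$, then $s_{m-3}$ is excluded; (iii) if only one symbol has been excluded by rules (i) and (ii), then $s_{m-4}$ is also excluded (rules referring to nonexistent terms are ignored). Then, regardless of Ben's moves, the sequence built never contains a repetition of size $2$, $3$ or $4$.
   Context: A repetition of size $h\geq1$ in a sequence is a block of consecutive terms of the form $x_1\ldots x_h x_1\ldots x_h$. In the nonrepetitive game Ann and Ben alternately (Ann first) append symbols from a symbol set to a sequence, nothing ever being erased; thus Ann chooses the terms with odd indices $s_1,s_3,\ldots$ and Ben those with even indices. *)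

theory Defs
  imports Main
begin

text \<open>Sequences are lists; the paper's term s_j (1-based) is xs ! (j - 1).
  A repetition of size h is a block x_1..x_h x_1..x_h of consecutive terms.\<close>

definition has_repetition :: "nat \<Rightarrow> 'a list \<Rightarrow> bool" where
  "has_repetition h xs \<longleftrightarrow> h \<ge> 1 \<and>
     (\<exists>i. i + 2 * h \<le> length xs \<and> take h (drop i xs) = take h (drop (i + h) xs))"

text \<open>Symbols excluded for Ann when the current sequence is xs = s_1 .. s_{m-1}
  (n = m - 1 = length xs, so s_{m-k} = xs ! (n - k), existing iff n \<ge> k).\<close>

definition rules_i_ii :: "'a list \<Rightarrow> 'a set" where
  "rules_i_ii xs = (let n = length xs in
      (if n \<ge> 2 then {xs ! (n - 2)} else {}) \<union>
      (if n \<ge> 4 \<and> xs ! (n - 1) = xs ! (n - 4) then {xs ! (n - 3)} else {}))"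

definition ann_excluded :: "'a list \<Rightarrow> 'a set" where
  "ann_excluded xs = rules_i_ii xs \<union>
      (if card (rules_i_ii xs) = 1 \<and> length xs \<ge> 4 then {xs ! (length xs - 4)} else {})"

text \<open>Ann moves at odd 1-based positions m, i.e. 0-based even positions k = m - 1.
  Ben's moves (even 1-based positions) are unconstrained.\<close>

definition ann_follows_strategy :: "'a list \<Rightarrow> bool" where
  "ann_follows_strategy xs \<longleftrightarrow>
     (\<forall>k < length xs. even k \<longrightarrow> xs ! k \<notin> ann_excluded (take k xs))"

end

theory Submission
  imports Defs
begin

lemma strat_facts:
  assumes "ann_follows_strategy s" "k < length s" "even k"
  shows "k \<ge> 2 \<Longrightarrow> s!k \<noteq> s!(k-2)"
    and "k \<ge> 4 \<Longrightarrow> s!(k-1) = s!(k-4) \<Longrightarrow> s!k \<noteq> s!(k-3)"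
    and "k \<ge> 4 \<Longrightarrow> s!k = s!(k-4) \<Longrightarrow> s!(k-1) = s!(k-4) \<and> s!(k-3) \<noteq> s!(k-2)"
proof -
  have ex: "s!k \<notin> ann_excluded (take k s)" using assms unfolding ann_follows_strategy_def by blast
  show "k \<ge> 2 \<Longrightarrow> s!k \<noteq> s!(k-2)"
    using ex assms(2) by (auto simp: ann_excluded_def rules_i_ii_def Let_def split: if_splits)
  show "k \<ge> 4 \<Longrightarrow> s!(k-1) = s!(k-4) \<Longrightarrow> s!k \<noteq> s!(k-3)"
    using ex assms(2) by (auto simp: ann_excluded_def rules_i_ii_def Let_def split: if_splits)
  show "k \<ge> 4 \<Longrightarrow> s!k = s!(k-4) \<Longrightarrow> s!(k-1) = s!(k-4) \<and> s!(k-3) \<noteq> s!(k-2)"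
    using ex assms(2) by (auto simp: ann_excluded_def rules_i_ii_def Let_def split: if_splits)
qed

lemma rep_nth:
  assumes "has_repetition h s"
  obtains i where "i + 2*h \<le> length s" "\<And>p. i \<le> p \<Longrightarrow> p < i + h \<Longrightarrow> s!p = s!(p+h)"
proof -
  obtain i where i: "i + 2 * h \<le> length s" "take h (drop i s) = take h (drop (i + h) s)"
    using assms unfolding has_repetition_def by blast
  have "s!p = s!(p+h)" if "i \<le> p" "p < i + h" for p
  proof -
    have "take h (drop i s) ! (p - i) = take h (drop (i + h) s) ! (p - i)" using i by simp
    then show ?thesis using that i(1) by (simp add: add.commute)
  qed
  then show ?thesis using that i(1) by blast
qed

theorem mainTheorem6:
  fixes s :: "'a list"
  assumes "ann_follows_strategy s"
  shows "\<not> has_repetition 2 s \<and> \<not> has_repetition 3 s \<and> \<not> has_repetition 4 s"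
proof (intro conjI notI)
  assume "has_repetition 2 s"
  then obtain i where i: "i + 4 \<le> length s" "\<And>p. i \<le> p \<Longrightarrow> p < i + 2 \<Longrightarrow> s!p = s!(p+2)"
    by (rule rep_nth) auto
  have "\<exists>k. even k \<and> (k = i+2 \<or> k = i+3)" by presburger
  then obtain k where k: "even k" "k = i+2 \<or> k = i+3" by blast
  have "s!k \<noteq> s!(k-2)" using strat_facts(1)[OF assms, of k] k i(1) by auto
  moreover have "s!(k-2) = s!k" using i(2)[of "k-2"] k by (auto simp: eval_nat_numeral)
  ultimately show False by simp
next
  assume "has_repetition 3 s"
  then obtain i where i: "i + 6 \<le> length s" "\<And>p. i \<le> p \<Longrightarrow> p < i + 3 \<Longrightarrow> s!p = s!(p+3)"
    by (rule rep_nth) auto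
  have "\<exists>k. even k \<and> (k = i+4 \<or> k = i+5)" by presburger
  then obtain k where k: "even k" "k = i+4 \<or> k = i+5" by blast
  have "s!(k-4) = s!(k-1)" using i(2)[of "k-4"] k by (auto simp: eval_nat_numeral)
  moreover have "s!(k-3) = s!k" using i(2)[of "k-3"] k by (auto simp: eval_nat_numeral)
  ultimately show False using strat_facts(2)[OF assms, of k] k i(1) by auto
next
  assume "has_repetition 4 s"
  then obtain i where i: "i + 8 \<le> length s" "\<And>p. i \<le> p \<Longrightarrow> p < i + 4 \<Longrightarrow> s!p = s!(p+4)"
    by (rule rep_nth) auto
  have "\<exists>k. even k \<and> (k = i+6 \<or> k = i+7)" by presburger
  then obtain k where k: "even k" "k = i+6 \<or> k = i+7" by blast
  have e1: "s!(k-4) = s!k" using i(2)[of "k-4"] k by (auto simp: eval_nat_numeral)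
  have e2: "s!(k-6) = s!(k-2)" using i(2)[of "k-6"] k by (auto simp: eval_nat_numeral)
  have c1: "s!(k-1) = s!(k-4) \<and> s!(k-3) \<noteq> s!(k-2)"
    using strat_facts(3)[OF assms, of k] k i(1) e1 by auto
  have c2: "s!(k-2-1) = s!(k-2-4)"
    using strat_facts(3)[OF assms, of "k-2"] k i(1) e2 by auto
  have "k-2-1 = k-3" "k-2-4 = k-6" by auto
  then show False using c1 c2 e2 by simp
qed

end
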